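(* Let $\lambda$ be a partition with $n$ parts and let $\beta \in U_\lambda(n)$. If $\beta \in UGC_\lambda(n) \cap UBP_\lambda(n)$, then the terminal pair $(\lambda,\beta)$ is nonpermutable.
   Context: Fix an integer $n \geq 1$ and write $[k] = \{1,\dots,k\}$. A partition is $\lambda = (\lambda_1,\dots,\lambda_n)$ with $\lambda_1 \geq \dots \geq \lambda_n \geq 0$ integers. Let $R_\lambda \subseteq [n-1]$ be the set of $q \in [n-1]$ with $\lambda_q > \lambda_{q+1}$; write its elements $q_1 < \dots < q_r$, and set $q_0 := 0$, $q_{r+1} := n$. For $h \in [r+1]$ the $h$-th carrel is the index interval $\{q_{h-1}+1,\dots,q_h\}$. A $\lambda$-tuple is an $n$-tuple $\beta$ with entries in $[n]$, considered with this carrel structure; it is upper if $\beta_i \geq i$ for all $i$. $U_\lambda(n)$ is the set of upper $\lambda$-tuples. Critical indices: for $\beta \in U_\lambda(n)$ and $h \in [r+1]$, set $x_1 := q_h$; given $x_{u-1}$, if some index $x$ with $q_{h-1} < x < x_{u-1}$ satisfies $\beta_{x_{u-1}} - \beta_x > x_{u-1} - x$, let $x_u$ be the largest such $x$, otherwise stop. The $x_u$ are the critical indices of $\beta$ in carrel $h$; the pairs $(x_u,\beta_{x_u})$ form its critical list. For $i \in [n]$ let $x(i)$ be the smallest critical index in the carrel of $i$ with $x(i) \geq i$. The $\lambda$-platform is $\Xi_\lambda(\beta) := \xi$ with $\xi_i := \beta_{x(i)}$. The critical list is a flag critical list if for every $h \in [r]$, $\beta_{q_h} \leq \beta_k$ where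 $k$ is the smallest critical index of $\beta$ in carrel $h+1$. $UGC_\lambda(n)$ is the set of $\beta \in U_\lambda(n)$ with flag critical list; $UBP_\lambda(n)$ is the set of $\beta \in U_\lambda(n)$ with $\beta_i \leq \Xi_\lambda(\beta)_i$ for all $i$. Lattice paths: lattice points are integer pairs $(a,b)$ with $a \geq 0$, $b \geq 1$. A lattice path is a sequence of lattice points each consecutive step of which is $(a,b) \to (a+1,b)$ or $(a,b) \to (a,b+1)$. An $n$-path is $(\Lambda_1,\dots,\Lambda_n)$ with $\Lambda_m$ a lattice path starting at $(n-m,m)$. The terminals of $(\lambda,\beta)$ are $P_m := (\lambda_m + n - m, \beta_m)$, $m \in [n]$. For a permutation $\pi$ of $[n]$, $\mathcal{LD}_\lambda(\beta;\pi)$ is the set of $n$-paths with $\Lambda_m$ ending at $P_{\pi_m}$ for every $m$ and no two distinct components sharing a lattice point. The pair $(\lambda,\beta)$ is nonpermutable if $\mathcal{LD}_\lambda(\beta;\pi) = \emptyset$ for every permutation $\pi \neq (1,\dots,n)$. *)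

theory Defs
  imports "HOL-Combinatorics.Permutations"
begin

text \<open>Indices are 1-based: a partition / tuple is a function nat => nat, only its
values on {1..n} matter.\<close>

definition is_partition :: "nat \<Rightarrow> (nat \<Rightarrow> nat) \<Rightarrow> bool" where
  "is_partition n lam \<longleftrightarrow> (\<forall>i\<in>{1..<n}. lam (Suc i) \<le> lam i)"

definition Rset :: "nat \<Rightarrow> (nat \<Rightarrow> nat) \<Rightarrow> nat set" where
  "Rset n lam = {q \<in> {1..n-1}. lam (Suc q) < lam q}"

definition qq :: "nat \<Rightarrow> (nat \<Rightarrow> nat) \<Rightarrow> nat \<Rightarrow> nat" where
  "qq n lam h = (if h = 0 then 0
                 else if h \<le> card (Rset n lam) then sorted_list_of_set (Rset n lam) ! (h - 1)
                 else n)"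

definition num_R :: "nat \<Rightarrow> (nat \<Rightarrow> nat) \<Rightarrow> nat" where
  "num_R n lam = card (Rset n lam)"

definition lam_tuple :: "nat \<Rightarrow> (nat \<Rightarrow> nat) \<Rightarrow> bool" where
  "lam_tuple n beta \<longleftrightarrow> (\<forall>i\<in>{1..n}. 1 \<le> beta i \<and> beta i \<le> n)"

definition U_lam :: "nat \<Rightarrow> (nat \<Rightarrow> nat) \<Rightarrow> (nat \<Rightarrow> nat) set" where
  "U_lam n lam = {beta. lam_tuple n beta \<and> (\<forall>i\<in>{1..n}. i \<le> beta i)}"

definition crit_cands :: "(nat \<Rightarrow> nat) \<Rightarrow> nat \<Rightarrow> nat \<Rightarrow> nat set" where
  "crit_cands beta lo x = {y. lo < y \<and> y < x \<and> int (beta x) - int (beta y) > int x - int y}"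

inductive_set crit :: "(nat \<Rightarrow> nat) \<Rightarrow> nat \<Rightarrow> nat \<Rightarrow> nat set"
  for beta :: "nat \<Rightarrow> nat" and lo :: nat and hi :: nat where
  start: "hi \<in> crit beta lo hi"
| step: "x \<in> crit beta lo hi \<Longrightarrow> crit_cands beta lo x \<noteq> {} \<Longrightarrow>
         Max (crit_cands beta lo x) \<in> crit beta lo hi"

definition crit_carrel :: "nat \<Rightarrow> (nat \<Rightarrow> nat) \<Rightarrow> (nat \<Rightarrow> nat) \<Rightarrow> nat \<Rightarrow> nat set" where
  "crit_carrel n lam beta h = crit beta (qq n lam (h - 1)) (qq n lam h)"

definition carrel_of :: "nat \<Rightarrow> (nat \<Rightarrow> nat) \<Rightarrow> nat \<Rightarrow> nat" where
  "carrel_of n lam i = (THE h. h \<in> {1..num_R n lam + 1} \<and> qq n lam (h - 1) < i \<and> i \<le> qq n lam h)"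

definition xcrit :: "nat \<Rightarrow> (nat \<Rightarrow> nat) \<Rightarrow> (nat \<Rightarrow> nat) \<Rightarrow> nat \<Rightarrow> nat" where
  "xcrit n lam beta i = (LEAST x. x \<in> crit_carrel n lam beta (carrel_of n lam i) \<and> i \<le> x)"

definition platform :: "nat \<Rightarrow> (nat \<Rightarrow> nat) \<Rightarrow> (nat \<Rightarrow> nat) \<Rightarrow> nat \<Rightarrow> nat" where
  "platform n lam beta i = beta (xcrit n lam beta i)"

definition UGC :: "nat \<Rightarrow> (nat \<Rightarrow> nat) \<Rightarrow> (nat \<Rightarrow> nat) set" where
  "UGC n lam = {beta \<in> U_lam n lam.
     \<forall>h\<in>{1..num_R n lam}. beta (qq n lam h) \<le> beta (Min (crit_carrel n lam beta (h + 1)))}"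

definition UBP :: "nat \<Rightarrow> (nat \<Rightarrow> nat) \<Rightarrow> (nat \<Rightarrow> nat) set" where
  "UBP n lam = {beta \<in> U_lam n lam. \<forall>i\<in>{1..n}. beta i \<le> platform n lam beta i}"

definition lattice_path :: "(nat \<times> nat) list \<Rightarrow> bool" where
  "lattice_path p \<longleftrightarrow> p \<noteq> [] \<and> (\<forall>z\<in>set p. 1 \<le> snd z) \<and>
     (\<forall>k. Suc k < length p \<longrightarrow>
        p ! Suc k = (Suc (fst (p ! k)), snd (p ! k)) \<or> p ! Suc k = (fst (p ! k), Suc (snd (p ! k))))"

definition terminal :: "nat \<Rightarrow> (nat \<Rightarrow> nat) \<Rightarrow> (nat \<Rightarrow> nat) \<Rightarrow> nat \<Rightarrow> nat \<times> nat" where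
  "terminal n lam beta m = (lam m + n - m, beta m)"

definition LD :: "nat \<Rightarrow> (nat \<Rightarrow> nat) \<Rightarrow> (nat \<Rightarrow> nat) \<Rightarrow> (nat \<Rightarrow> nat) \<Rightarrow> (nat \<Rightarrow> (nat \<times> nat) list) set" where
  "LD n lam beta pi = {L. (\<forall>m. m \<notin> {1..n} \<longrightarrow> L m = []) \<and>
     (\<forall>m\<in>{1..n}. lattice_path (L m) \<and> hd (L m) = (n - m, m) \<and>
                  last (L m) = terminal n lam beta (pi m)) \<and>
     (\<forall>m\<in>{1..n}. \<forall>m'\<in>{1..n}. m \<noteq> m' \<longrightarrow> set (L m) \<inter> set (L m') = {})}"

definition nonpermutable :: "nat \<Rightarrow> (nat \<Rightarrow> nat) \<Rightarrow> (nat \<Rightarrow> nat) \<Rightarrow> bool" where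
  "nonpermutable n lam beta \<longleftrightarrow> (\<forall>pi. pi permutes {1..n} \<and> pi \<noteq> id \<longrightarrow> LD n lam beta pi = {})"

end

theory Submission
  imports Defs
begin


lemma lp_step:
  assumes "lattice_path p" "Suc k < length p"
  shows "fst (p!Suc k) + snd (p!Suc k) = Suc (fst (p!k) + snd (p!k))
       \<and> fst (p!k) \<le> fst (p!Suc k) \<and> snd (p!k) \<le> snd (p!Suc k) \<and> fst (p!Suc k) \<le> Suc (fst (p!k))"
  proof -
  have "p ! Suc k = (Suc (fst (p ! k)), snd (p ! k)) \<or> p ! Suc k = (fst (p ! k), Suc (snd (p ! k)))"
    using assms unfolding lattice_path_def by blast
  then show ?thesis by auto
qed

lemma lp_mono:
  assumes "lattice_path p" "k \<le> l" "l < length p"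
  shows "fst (p!k) \<le> fst (p!l) \<and> snd (p!k) \<le> snd (p!l)"
  using assms(2,3)
proof (induction l rule: dec_induct)
  case base then show ?case by simp
next
  case (step l)
  then show ?case using lp_step[OF assms(1), of l] by (meson Suc_lessD le_trans)
qed

lemma lp_sum:
  assumes "lattice_path p" "k < length p"
  shows "fst (p!k) + snd (p!k) = fst (hd p) + snd (hd p) + k"
  using assms(2)
proof (induction k)
  case 0 then show ?case using assms(1) unfolding lattice_path_def by (simp add: hd_conv_nth)
next
  case (Suc k) then show ?case using lp_step[OF assms(1), of k] by simp
qed

lemma lp_le_last:
  assumes "lattice_path p" "z \<in> set p"
  shows "fst z \<le> fst (last p) \<and> snd z \<le> snd (last p)"
proof -
  obtain k where k: "k < length p" "z = p!k" using assms(2) by (metis in_set_conv_nth)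
  have "p \<noteq> []" using assms(1) unfolding lattice_path_def by simp
  then have "last p = p ! (length p - 1)" by (simp add: last_conv_nth)
  then show ?thesis using lp_mono[OF assms(1), of k "length p - 1"] k by auto
qed

lemma lp_hd_le:
  assumes "lattice_path p" "z \<in> set p"
  shows "fst (hd p) \<le> fst z \<and> snd (hd p) \<le> snd z"
proof -
  obtain k where k: "k < length p" "z = p!k" using assms(2) by (metis in_set_conv_nth)
  have "p \<noteq> []" using assms(1) unfolding lattice_path_def by simp
  then have "hd p = p ! 0" by (simp add: hd_conv_nth)
  then show ?thesis using lp_mono[OF assms(1), of 0 k] k by auto
qed

lemma lp_cross:
  assumes "lattice_path p" "fst (hd p) < c" "c \<le> fst (last p)"
  shows "\<exists>y. (c, y) \<in> set p \<and> (c - 1, y) \<in> set p"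
proof -
  have ne: "p \<noteq> []" using assms(1) unfolding lattice_path_def by simp
  define P where "P = (\<lambda>k. k < length p \<and> c \<le> fst (p!k))"
  define k where "k = (LEAST k. P k)"
  have ex: "P (length p - 1)"
    using ne assms(3) unfolding P_def by (simp add: last_conv_nth)
  have k1: "P k" unfolding k_def by (rule LeastI, rule ex)
  have h0: "hd p = p ! 0" using ne by (simp add: hd_conv_nth)
  have k0: "k \<noteq> 0"
  proof
    assume "k = 0" then show False using k1 assms(2) h0 unfolding P_def by simp
  qed
  then obtain j where j: "k = Suc j" by (cases k) auto
  have "\<not> P j"
  proof
    assume "P j"
    then have "k \<le> j" unfolding k_def by (rule Least_le)
    then show False using j by simp
  qed
  then have jl: "fst (p!j) < c" using k1 j unfolding P_def by auto
  have kl: "Suc j < length p" "c \<le> fst (p ! Suc j)" using k1 j unfolding P_def by auto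
  have st: "p ! Suc j = (Suc (fst (p ! j)), snd (p ! j)) \<or> p ! Suc j = (fst (p ! j), Suc (snd (p ! j)))"
    using assms(1) kl(1) unfolding lattice_path_def by blast
  have e: "p ! Suc j = (Suc (fst (p ! j)), snd (p ! j))" using st jl kl(2) by auto
  then have c: "c = Suc (fst (p!j))" using jl kl(2) by simp
  have "p ! Suc j = (c, snd (p!j))" using e c by simp
  moreover have "p ! j = (c - 1, snd (p!j))" using c by (simp add: prod_eq_iff)
  moreover have "p ! Suc j \<in> set p" "p ! j \<in> set p" using kl(1) by auto
  ultimately show ?thesis by metis
qed

lemma disj_G:
  assumes p: "lattice_path p" and q: "lattice_path q"
    and hp: "hd p = (n - i, i)" and hq: "hd q = (n - j, j)" and ij: "i < j" "j \<le> n"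
    and dis: "set p \<inter> set q = {}"
    and xy: "(x, y) \<in> set p" and xy': "(x, y') \<in> set q"
  shows "y < y'"
proof -
  have D: "fst (q!k) < fst (p!k)" if "k < length p" "k < length q" for k
    using that
  proof (induction k)
    case 0 then show ?case using p q hp hq ij unfolding lattice_path_def by (simp add: hd_conv_nth)
  next
    case (Suc k)
    have a: "fst (q!Suc k) \<le> Suc (fst (q!k))" using lp_step[OF q, of k] Suc by auto
    have b: "fst (p!k) \<le> fst (p!Suc k)" using lp_step[OF p, of k] Suc by auto
    have c: "fst (q!k) < fst (p!k)" using Suc by auto
    have sp: "fst (p!Suc k) + snd (p!Suc k) = n + Suc k" using lp_sum[OF p Suc.prems(1)] hp ij by simp
    have sq: "fst (q!Suc k) + snd (q!Suc k) = n + Suc k" using lp_sum[OF q Suc.prems(2)] hq ij by simp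
    show ?case
    proof (rule ccontr)
      assume "\<not> ?case"
      then have "fst (q!Suc k) = fst (p!Suc k)" using a b c by linarith
      then have "q!Suc k = p!Suc k" using sp sq by (metis add_left_cancel prod.collapse)
      then show False using dis Suc.prems by (metis disjoint_iff nth_mem)
    qed
  qed
  obtain k1 where k1: "k1 < length p" "p!k1 = (x,y)" using xy by (metis in_set_conv_nth)
  obtain k2 where k2: "k2 < length q" "q!k2 = (x,y')" using xy' by (metis in_set_conv_nth)
  show ?thesis
  proof (rule ccontr)
    assume "\<not> y < y'"
    have s1: "x + y = n + k1" using lp_sum[OF p k1(1)] hp ij k1 by simp
    have s2: "x + y' = n + k2" using lp_sum[OF q k2(1)] hq ij k2 by simp
    have "k2 \<le> k1" using s1 s2 \<open>\<not> y < y'\<close> by linarith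
    show False
    proof (cases "k2 = k1")
      case True then have "y = y'" using s1 s2 by simp
      then show False using dis xy xy' by blast
    next
      case False
      then have k2p: "k2 < length p" using \<open>k2 \<le> k1\<close> k1 by linarith
      have "fst (q!k2) < fst (p!k2)" using D[OF k2p k2(1)] .
      moreover have "fst (p!k2) \<le> fst (p!k1)" using lp_mono[OF p \<open>k2 \<le> k1\<close> k1(1)] by simp
      ultimately show False using k1 k2 by simp
    qed
  qed
qed



lemma cands_sub: "crit_cands beta lo x \<subseteq> {lo<..<x}"
  unfolding crit_cands_def by auto

lemma cands_fin: "finite (crit_cands beta lo x)"
  by (rule finite_subset[OF cands_sub]) simp

lemma cands_Max: "crit_cands beta lo x \<noteq> {} \<Longrightarrow> Max (crit_cands beta lo x) \<in> crit_cands beta lo x"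
  using cands_fin by (rule Max_in)

lemma crit_range: "z \<in> crit beta lo hi \<Longrightarrow> lo < hi \<Longrightarrow> lo < z \<and> z \<le> hi"
proof (induction rule: crit.induct)
  case start then show ?case by simp
next
  case (step x)
  have "Max (crit_cands beta lo x) \<in> {lo<..<x}" using cands_Max[OF step(2)] cands_sub[of beta lo x] by blast
  then show ?case using step by auto
qed

definition gstep :: "(nat \<Rightarrow> nat) \<Rightarrow> nat \<Rightarrow> nat \<Rightarrow> nat" where
  "gstep beta lo x = (if crit_cands beta lo x = {} then x else Max (crit_cands beta lo x))"

lemma gstep_le: "gstep beta lo x \<le> x"
proof (cases "crit_cands beta lo x = {}")
  case True then show ?thesis by (simp add: gstep_def)
next
  case False
  have "Max (crit_cands beta lo x) \<in> {lo<..<x}" using cands_Max[OF False] cands_sub[of beta lo x] by blast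
  then show ?thesis using False by (simp add: gstep_def)
qed

lemma crit_seq: "z \<in> crit beta lo hi \<Longrightarrow> \<exists>k. z = (gstep beta lo ^^ k) hi"
proof (induction rule: crit.induct)
  case start then show ?case by (metis funpow_0)
next
  case (step x)
  then obtain k where "x = (gstep beta lo ^^ k) hi" by blast
  then have "Max (crit_cands beta lo x) = (gstep beta lo ^^ Suc k) hi"
    using step(2) by (simp add: gstep_def)
  then show ?case by blast
qed

lemma seq_anti: "k1 \<le> k2 \<Longrightarrow> (gstep beta lo ^^ k2) hi \<le> (gstep beta lo ^^ k1) hi"
proof (induction k2 rule: dec_induct)
  case base then show ?case by simp
next
  case (step k) then show ?case using gstep_le[of beta lo "(gstep beta lo ^^ k) hi"] by simp
qed

lemma seq_stable:
  assumes "crit_cands beta lo ((gstep beta lo ^^ k) hi) = {}" "k \<le> k'"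
  shows "(gstep beta lo ^^ k') hi = (gstep beta lo ^^ k) hi"
  using assms(2)
proof (induction k' rule: dec_induct)
  case base then show ?case by simp
next
  case (step m)
  have "(gstep beta lo ^^ Suc m) hi = gstep beta lo ((gstep beta lo ^^ m) hi)" by simp
  also have "\<dots> = gstep beta lo ((gstep beta lo ^^ k) hi)" using step by simp
  also have "\<dots> = (gstep beta lo ^^ k) hi" using assms(1) unfolding gstep_def by simp
  finally show ?case .
qed

lemma crit_pred:
  assumes "z \<in> crit beta lo hi" "x \<in> crit beta lo hi" "z < x"
  shows "crit_cands beta lo x \<noteq> {} \<and> z \<le> Max (crit_cands beta lo x)"
proof -
  obtain k1 where k1: "z = (gstep beta lo ^^ k1) hi" using crit_seq[OF assms(1)] by blast
  obtain k2 where k2: "x = (gstep beta lo ^^ k2) hi" using crit_seq[OF assms(2)] by blast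
  have "k2 < k1"
  proof (rule ccontr)
    assume "\<not> k2 < k1" then have "k1 \<le> k2" by simp
    then show False using seq_anti[of k1 k2 beta lo hi] k1 k2 assms(3) by simp
  qed
  have ne: "crit_cands beta lo x \<noteq> {}"
  proof
    assume "crit_cands beta lo x = {}"
    then have "(gstep beta lo ^^ k1) hi = x" using seq_stable[of beta lo k2 hi k1] k2 \<open>k2 < k1\<close> by simp
    then show False using k1 assms(3) by simp
  qed
  have "z \<le> (gstep beta lo ^^ Suc k2) hi" using seq_anti[of "Suc k2" k1 beta lo hi] k1 \<open>k2 < k1\<close> by simp
  also have "\<dots> = Max (crit_cands beta lo x)" using ne k2 by (simp add: gstep_def)
  finally show ?thesis using ne by simp
qed

lemma crit_fin: "lo < hi \<Longrightarrow> finite (crit beta lo hi)"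
  by (rule finite_subset[of _ "{lo<..hi}"]) (auto dest: crit_range)

lemma R_sub: "Rset n lam \<subseteq> {1..n-1}" unfolding Rset_def by auto

lemma R_fin: "finite (Rset n lam)" by (rule finite_subset[OF R_sub]) simp

lemma qq0: "qq n lam 0 = 0" unfolding qq_def by simp

lemma qq_big: "h > num_R n lam \<Longrightarrow> qq n lam h = n" unfolding qq_def num_R_def by auto

lemma qq_mid: "1 \<le> h \<Longrightarrow> h \<le> num_R n lam \<Longrightarrow> qq n lam h = sorted_list_of_set (Rset n lam) ! (h - 1)"
  unfolding qq_def num_R_def by auto

lemma qq_in_R: "1 \<le> h \<Longrightarrow> h \<le> num_R n lam \<Longrightarrow> qq n lam h \<in> Rset n lam"
proof -
  assume a: "1 \<le> h" "h \<le> num_R n lam"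
  have "length (sorted_list_of_set (Rset n lam)) = num_R n lam" unfolding num_R_def by simp
  then have "sorted_list_of_set (Rset n lam) ! (h - 1) \<in> set (sorted_list_of_set (Rset n lam))"
    using a by (intro nth_mem) auto
  then show ?thesis using qq_mid[OF a] R_fin by simp
qed

lemma R_is_qq: "e \<in> Rset n lam \<Longrightarrow> \<exists>h. 1 \<le> h \<and> h \<le> num_R n lam \<and> qq n lam h = e"
proof -
  assume e: "e \<in> Rset n lam"
  then have "e \<in> set (sorted_list_of_set (Rset n lam))" using R_fin by simp
  then obtain t where t: "t < length (sorted_list_of_set (Rset n lam))" "sorted_list_of_set (Rset n lam) ! t = e"
    by (metis in_set_conv_nth)
  have "length (sorted_list_of_set (Rset n lam)) = num_R n lam" unfolding num_R_def by simp
  then show ?thesis using t qq_mid[of "Suc t" n lam] by (intro exI[of _ "Suc t"]) auto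
qed

lemma qq_lt_n: "1 \<le> h \<Longrightarrow> h \<le> num_R n lam \<Longrightarrow> 0 < qq n lam h \<and> qq n lam h < n"
  using qq_in_R[of h n lam] R_sub[of n lam] by fastforce

lemma qq_strict:
  assumes "0 < n" "h < h'" "h' \<le> Suc (num_R n lam)"
  shows "qq n lam h < qq n lam h'"
proof (cases "h' = Suc (num_R n lam)")
  case True
  then have "qq n lam h' = n" using qq_big by simp
  then show ?thesis using qq_lt_n[of h n lam] assms True qq0[of n lam]
    by (cases "h = 0") (auto simp: qq0 intro: order.strict_trans1)
next
  case False
  then have h': "h' \<le> num_R n lam" using assms by simp
  show ?thesis
  proof (cases "h = 0")
    case True then show ?thesis using qq_lt_n[of h' n lam] assms h' by (simp add: qq0)
  next
    case False
    let ?s = "sorted_list_of_set (Rset n lam)"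
    have len: "length ?s = num_R n lam" unfolding num_R_def by simp
    have "sorted_wrt (<) ?s" by simp
    moreover have "h - 1 < h' - 1" "h' - 1 < length ?s" using assms False h' len by auto
    ultimately have "?s ! (h - 1) < ?s ! (h' - 1)" using sorted_wrt_nth_less by blast
    then show ?thesis using qq_mid[of h n lam] qq_mid[of h' n lam] assms False h' by simp
  qed
qed

lemma qq_mono:
  assumes "0 < n" "h \<le> h'" "h' \<le> Suc (num_R n lam)" shows "qq n lam h \<le> qq n lam h'"
  using qq_strict[OF assms(1), of h h' lam] assms by (cases "h = h'") auto

lemma qq_lt_imp:
  assumes "0 < n" "qq n lam h < qq n lam h'" "h \<le> Suc (num_R n lam)" shows "h < h'"
  using qq_mono[OF assms(1), of h' h lam] assms by (metis leI not_less)

lemma qq_top: "qq n lam (Suc (num_R n lam)) = n" using qq_big by simp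

lemma carrel_ex:
  assumes "1 \<le> c" "c \<le> n"
  shows "\<exists>g. 1 \<le> g \<and> g \<le> Suc (num_R n lam) \<and> qq n lam (g - 1) < c \<and> c \<le> qq n lam g"
proof -
  define g where "g = (LEAST g. c \<le> qq n lam g)"
  have e: "c \<le> qq n lam (Suc (num_R n lam))" using qq_top assms by simp
  have g1: "c \<le> qq n lam g" unfolding g_def by (rule LeastI, rule e)
  have g2: "g \<le> Suc (num_R n lam)" unfolding g_def by (rule Least_le, rule e)
  have g0: "g \<noteq> 0" using g1 assms qq0[of n lam] by (metis le_zero_eq not_one_le_zero)
  have "\<not> c \<le> qq n lam (g - 1)"
  proof
    assume "c \<le> qq n lam (g - 1)"
    then have "g \<le> g - 1" unfolding g_def by (rule Least_le)
    then show False using g0 by simp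
  qed
  then show ?thesis using g0 g1 g2 by (intro exI[of _ g]) auto
qed

lemma carrel_unique:
  assumes "0 < n" "1 \<le> g" "g \<le> Suc (num_R n lam)" "qq n lam (g - 1) < c" "c \<le> qq n lam g"
     and "1 \<le> g'" "g' \<le> Suc (num_R n lam)" "qq n lam (g' - 1) < c" "c \<le> qq n lam g'"
  shows "g = g'"
proof -
  have "qq n lam (g - 1) < qq n lam g'" using assms by linarith
  then have "g - 1 < g'" using qq_lt_imp[OF assms(1), of lam "g - 1" g'] assms by linarith
  moreover have "qq n lam (g' - 1) < qq n lam g" using assms by linarith
  then have "g' - 1 < g" using qq_lt_imp[OF assms(1), of lam "g' - 1" g] assms by linarith
  ultimately show ?thesis using assms by linarith
qed

lemma carrel_of_eq:
  assumes "0 < n" "1 \<le> g" "g \<le> Suc (num_R n lam)" "qq n lam (g - 1) < c" "c \<le> qq n lam g"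
  shows "carrel_of n lam c = g"
  unfolding carrel_of_def
proof (rule the_equality)
  show "g \<in> {1..num_R n lam + 1} \<and> qq n lam (g - 1) < c \<and> c \<le> qq n lam g" using assms by simp
next
  fix h assume "h \<in> {1..num_R n lam + 1} \<and> qq n lam (h - 1) < c \<and> c \<le> qq n lam h"
  then show "h = g" using carrel_unique[OF assms(1), of h lam c g] assms by auto
qed

lemma lam_const:
  assumes n0: "0 < n" and part: "is_partition n lam" and g: "1 \<le> g" "g \<le> Suc (num_R n lam)"
    and c: "qq n lam (g - 1) < c" "Suc c \<le> qq n lam g"
  shows "lam (Suc c) = lam c"
proof -
  have cn: "c \<in> {1..<n}" using c qq_mono[OF n0, of g "Suc (num_R n lam)" lam] g qq_top[of n lam] by auto
  have "c \<notin> Rset n lam"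
  proof
    assume "c \<in> Rset n lam"
    then obtain t where t: "1 \<le> t" "t \<le> num_R n lam" "qq n lam t = c" using R_is_qq by blast
    have "g - 1 < t" using qq_lt_imp[OF n0, of lam "g - 1" t] t c g by simp
    moreover have "t < g" using qq_lt_imp[OF n0, of lam t g] t c by simp
    ultimately show False by simp
  qed
  then have "\<not> lam (Suc c) < lam c" using cn unfolding Rset_def by auto
  moreover have "lam (Suc c) \<le> lam c" using part cn unfolding is_partition_def by auto
  ultimately show ?thesis by simp
qed



lemma part_mono:
  assumes "is_partition n lam" "1 \<le> c" "c \<le> c'" "c' \<le> n"
  shows "lam c' \<le> lam c"
  using assms(3,4)
proof (induction c' rule: dec_induct)
  case base then show ?case by simp
next
  case (step m)
  then have "lam (Suc m) \<le> lam m" using assms(1,2) unfolding is_partition_def by auto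
  then show ?case using step by simp
qed

theorem proposition7p2:
  fixes n :: nat and lam beta :: "nat \<Rightarrow> nat"
  assumes "1 \<le> n"
    and "is_partition n lam"
    and "beta \<in> U_lam n lam"
    and "beta \<in> UGC n lam \<inter> UBP n lam"
  shows "nonpermutable n lam beta"
  unfolding nonpermutable_def
proof (intro allI impI)
  fix pi assume pia: "pi permutes {1..n} \<and> pi \<noteq> id"
  then have perm: "pi permutes {1..n}" and nid: "pi \<noteq> id" by auto
  have n0: "0 < n" using assms(1) by simp
  note part = assms(2)
  have UGC: "\<forall>h\<in>{1..num_R n lam}. beta (qq n lam h) \<le> beta (Min (crit_carrel n lam beta (h + 1)))"
    using assms(4) unfolding UGC_def by auto
  have UBP: "\<forall>i\<in>{1..n}. beta i \<le> platform n lam beta i"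
    using assms(4) unfolding UBP_def by auto
  show "LD n lam beta pi = {}"
  proof (rule ccontr)
    assume "LD n lam beta pi \<noteq> {}"
    then obtain L where L: "L \<in> LD n lam beta pi" by blast
    define X where "X = (\<lambda>m. lam m + n - m)"
    have Lp: "lattice_path (L m)" "hd (L m) = (n - m, m)" "last (L m) = (X (pi m), beta (pi m))"
      if "m \<in> {1..n}" for m
      using L that unfolding LD_def terminal_def X_def by auto
    have Ld: "set (L m) \<inter> set (L m') = {}" if "m \<in> {1..n}" "m' \<in> {1..n}" "m \<noteq> m'" for m m'
      using L that unfolding LD_def by auto
    have G: "y < y'" if "m \<in> {1..n}" "m' \<in> {1..n}" "m < m'" "(x, y) \<in> set (L m)" "(x, y') \<in> set (L m')"
      for m m' x y y'
      using disj_G[OF Lp(1)[OF that(1)] Lp(1)[OF that(2)] Lp(2)[OF that(1)] Lp(2)[OF that(2)] that(3) _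
          Ld[OF that(1,2)] that(4,5)] that by auto
    have lastin: "last (L m) \<in> set (L m)" if "m \<in> {1..n}" for m
      using Lp(1)[OF that] unfolding lattice_path_def by simp
    have pin: "pi m \<in> {1..n}" if "m \<in> {1..n}" for m using permutes_in_image[OF perm, of m] that by blast
    have piout: "pi m = m" if "m \<notin> {1..n}" for m using perm that by (simp add: permutes_not_in)
    have pre: "\<exists>k\<in>{1..n}. pi k = c" if "c \<in> {1..n}" for c
      using perm that by (metis permutes_image imageE)
    have inj: "pi k = pi k' \<Longrightarrow> k = k'" for k k' using perm by (metis permutes_inj injD)
    define NF where "NF = {m \<in> {1..n}. pi m \<noteq> m}"
    have NFne: "NF \<noteq> {}"
    proof
      assume "NF = {}"
      then have "pi m = m" for m using piout unfolding NF_def by (cases "m \<in> {1..n}") auto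
      then show False using nid by auto
    qed
    have NFfin: "finite NF" unfolding NF_def by simp
    define b where "b = Max NF"
    have bNF: "b \<in> NF" unfolding b_def using NFne NFfin by (rule Max_in[rotated])
    then have b1: "b \<in> {1..n}" and b2: "pi b \<noteq> b" unfolding NF_def by auto
    have fixb: "pi m = m" if "m \<in> {1..n}" "b < m" for m
    proof (rule ccontr)
      assume "pi m \<noteq> m" then have "m \<in> NF" unfolding NF_def using that by auto
      then have "m \<le> b" unfolding b_def using NFfin by simp
      then show False using that by simp
    qed
    define a where "a = pi b"
    have a1: "a \<in> {1..n}" unfolding a_def using pin[OF b1] .
    have ab: "a < b"
    proof (rule ccontr)
      assume "\<not> a < b"
      then have "b < a" using b2 unfolding a_def by simp
      then have "pi a = a" using fixb[OF a1] by simp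
      then have "pi a = pi b" unfolding a_def by simp
      then show False using inj b2 unfolding a_def by metis
    qed
    have owner: "\<exists>k\<in>{1..n}. k < b \<and> pi k = c" if oc: "c \<in> {1..n}" "a < c" "c \<le> b" for c
    proof -
      obtain k where k: "k \<in> {1..n}" "pi k = c" using pre[OF oc(1)] by blast
      have "k \<noteq> b" using k oc unfolding a_def by auto
      moreover have "\<not> b < k" using fixb[OF k(1)] k oc by auto
      ultimately have "k < b" by simp
      then show ?thesis using k by blast
    qed
    obtain i where i: "i \<in> {1..n}" "i < b" "pi i = b" using owner[OF b1 ab order_refl] by blast
    have Xdef: "X m = lam m + (n - m)" if "m \<le> n" for m unfolding X_def using that by simp
    have colb: "n - b < X b"
    proof -
      have "fst (hd (L i)) \<le> fst (last (L i))" using lp_hd_le[OF Lp(1)[OF i(1)] lastin[OF i(1)]] by simp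
      then have "n - i \<le> X b" using Lp(2,3)[OF i(1)] i by simp
      then show ?thesis using i b1 by simp
    qed
    have lamb: "1 \<le> lam b" using colb Xdef[of b] b1 by simp
    have Xmono: "X c \<le> X c'" if "1 \<le> c'" "c' \<le> c" "c \<le> n" for c c'
      using part_mono[OF part that] Xdef[of c] Xdef[of c'] that by simp
    have Lb: "lattice_path (L b)" "hd (L b) = (n - b, b)" "last (L b) = (X a, beta a)"
      using Lp[OF b1] unfolding a_def by auto
    have above: "beta c < beta a" if ac: "c \<in> {1..n}" "a < c" "c \<le> b" for c
    proof -
      obtain k where k: "k \<in> {1..n}" "k < b" "pi k = c" using owner[OF ac] by blast
      have "X b \<le> X c" using Xmono[of c b] ac b1 by simp
      moreover have "X c \<le> X a" using Xmono[of a c] ac a1 by simp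
      ultimately obtain y where y: "(X c, y) \<in> set (L b)"
        using lp_cross[OF Lb(1), of "X c"] Lb colb by auto
      have "(X c, beta c) \<in> set (L k)" using lastin[OF k(1)] Lp(3)[OF k(1)] k by simp
      then have "beta c < y" using G[OF k(1) b1 k(2)] y by simp
      moreover have "y \<le> beta a" using lp_le_last[OF Lb(1) y] Lb by simp
      ultimately show ?thesis by simp
    qed
    obtain h where h: "1 \<le> h" "h \<le> Suc (num_R n lam)" "qq n lam (h - 1) < b" "b \<le> qq n lam h"
      using carrel_ex[of b n lam] b1 by auto
    define lo where "lo = qq n lam (h - 1)"
    define hi where "hi = qq n lam h"
    have lohi: "lo < hi" unfolding lo_def hi_def using qq_strict[OF n0, of "h - 1" h lam] h by simp
    have hin: "hi \<le> n" unfolding hi_def using qq_mono[OF n0 h(2) order_refl] qq_top[of n lam] by simp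
    have cch: "crit_carrel n lam beta h = crit beta lo hi" unfolding crit_carrel_def lo_def hi_def by simp
    have bcrit: "b \<in> crit beta lo hi"
    proof (rule ccontr)
      assume nb: "b \<notin> crit beta lo hi"
      define x0 where "x0 = (LEAST x. x \<in> crit beta lo hi \<and> b \<le> x)"
      have wit: "hi \<in> crit beta lo hi \<and> b \<le> hi" using h unfolding hi_def by (auto intro: crit.start)
      have x0p: "x0 \<in> crit beta lo hi \<and> b \<le> x0" unfolding x0_def by (rule LeastI, rule wit)
      have bx0: "b < x0" using x0p nb by (cases "b = x0") auto
      have x0hi: "x0 \<le> hi" using crit_range[OF conjunct1[OF x0p] lohi] by simp
      have x0n: "x0 \<le> n" using x0hi hin by simp
      have nc: "b \<notin> crit_cands beta lo x0"
      proof
        assume bc: "b \<in> crit_cands beta lo x0"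
        then have ne: "crit_cands beta lo x0 \<noteq> {}" by auto
        define M where "M = Max (crit_cands beta lo x0)"
        have Mc: "M \<in> crit beta lo hi" unfolding M_def using crit.step[OF conjunct1[OF x0p] ne] .
        have "b \<le> M" unfolding M_def using cands_fin bc by (rule Max_ge)
        then have "b < M" using Mc nb by (cases "b = M") auto
        then have "x0 \<le> M" unfolding x0_def using Mc by (intro Least_le) auto
        moreover have "M < x0" using cands_Max[OF ne] cands_sub[of beta lo x0] unfolding M_def by auto
        ultimately show False by simp
      qed
      have lob: "lo < b" using h unfolding lo_def by simp
      have ineq: "\<not> (int (beta x0) - int (beta b) > int x0 - int b)"
        using nc lob bx0 unfolding crit_cands_def by auto
      have lc: "lam c = lam b" if "b \<le> c" "c \<le> x0" for c
        using that
      proof (induction c rule: dec_induct)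
        case base then show ?case by simp
      next
        case (step m)
        have "lam (Suc m) = lam m"
          using lam_const[OF n0 part h(1,2), of m] step lob x0hi unfolding lo_def hi_def by simp
        then show ?case using step by simp
      qed
      have chain: "\<exists>y. beta b + 1 + k \<le> y \<and> (X (b + k) - 1, y) \<in> set (L (b + k))" if "k \<le> x0 - b" for k
        using that
      proof (induction k)
        case 0
        have "X b \<le> X a" using Xmono[of a b] ab a1 b1 by simp
        then obtain y where y: "(X b, y) \<in> set (L b)" "(X b - 1, y) \<in> set (L b)"
          using lp_cross[OF Lb(1), of "X b"] Lb colb by auto
        have "(X b, beta b) \<in> set (L i)" using lastin[OF i(1)] Lp(3)[OF i(1)] i by simp
        then have "beta b < y" using G[OF i(1) b1 i(2)] y by simp
        then have "beta b + 1 + 0 \<le> y" by simp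
        then show ?case using y(2) by auto
      next
        case (Suc k)
        define c where "c = b + k"
        have cn: "Suc c \<le> n" "Suc c \<le> x0" "b \<le> c" using Suc x0n unfolding c_def by auto
        obtain y where y: "beta b + 1 + k \<le> y" "(X c - 1, y) \<in> set (L c)" using Suc unfolding c_def by auto
        have c1: "c \<in> {1..n}" "Suc c \<in> {1..n}" using cn b1 by auto
        have lsc: "lam (Suc c) = lam c" using lc[of "Suc c"] lc[of c] cn by simp
        have Xs: "X (Suc c) = X c - 1" using Xdef[of c] Xdef[of "Suc c"] lsc cn lamb lc[of c] by simp
        have pis: "pi (Suc c) = Suc c" using fixb[OF c1(2)] cn by simp
        have Ls: "lattice_path (L (Suc c))" "fst (hd (L (Suc c))) = n - Suc c" "fst (last (L (Suc c))) = X (Suc c)"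
          "last (L (Suc c)) = (X (Suc c), beta (Suc c))"
          using Lp[OF c1(2)] pis by auto
        have "n - Suc c < X (Suc c)" using Xdef[of "Suc c"] cn lamb lc[of "Suc c"] by simp
        then obtain y' where y': "(X (Suc c), y') \<in> set (L (Suc c))" "(X (Suc c) - 1, y') \<in> set (L (Suc c))"
          using lp_cross[OF Ls(1), of "X (Suc c)"] Ls by auto
        have "y < y'" using G[OF c1(1) c1(2) _ _ y'(1)] y(2) Xs by simp
        then have "beta b + 1 + Suc k \<le> y'" using y(1) by simp
        moreover have "b + Suc k = Suc c" unfolding c_def by simp
        ultimately show ?case using y'(2) by metis
      qed
      obtain y where y: "beta b + 1 + (x0 - b) \<le> y" "(X x0 - 1, y) \<in> set (L x0)"
        using chain[of "x0 - b"] bx0 by auto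
      have x01: "x0 \<in> {1..n}" using x0n bx0 b1 by simp
      have "last (L x0) = (X x0, beta x0)" using Lp(3)[OF x01] fixb[OF x01 bx0] by simp
      then have "y \<le> beta x0" using lp_le_last[OF Lp(1)[OF x01] y(2)] by simp
      then show False using ineq y bx0 by linarith
    qed
    obtain g where g: "1 \<le> g" "g \<le> Suc (num_R n lam)" "qq n lam (g - 1) < a" "a \<le> qq n lam g"
      using carrel_ex[of a n lam] a1 by auto
    have cag: "carrel_of n lam a = g" using carrel_of_eq[OF n0 g] .
    define lo' where "lo' = qq n lam (g - 1)"
    define hi' where "hi' = qq n lam g"
    have lohi': "lo' < hi'" unfolding lo'_def hi'_def using qq_strict[OF n0, of "g - 1" g lam] g by simp
    have gh: "g \<le> h"
    proof (rule ccontr)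
      assume "\<not> g \<le> h"
      then have "qq n lam h \<le> qq n lam (g - 1)" using qq_mono[OF n0, of h "g - 1" lam] g by simp
      then show False using g h ab by simp
    qed
    have ghb: "hi' < b" if "g < h"
    proof -
      have "qq n lam g \<le> qq n lam (h - 1)" using qq_mono[OF n0, of g "h - 1" lam] that h by simp
      then show ?thesis using h unfolding hi'_def by simp
    qed
    have small: "x \<le> b" if "x \<in> crit beta lo' hi'" "a \<le> x" "\<forall>z. z \<in> crit beta lo' hi' \<and> a \<le> z \<longrightarrow> x \<le> z"
        "a < x" for x
    proof (cases "g = h")
      case True
      then have "b \<in> crit beta lo' hi'" using bcrit unfolding lo_def hi_def lo'_def hi'_def by simp
      then show ?thesis using that ab by auto
    next
      case False
      then show ?thesis using crit_range[OF that(1) lohi'] ghb gh by simp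
    qed
    have ubp: "beta a \<le> beta (xcrit n lam beta a)"
      using UBP a1 unfolding platform_def by auto
    define x1 where "x1 = xcrit n lam beta a"
    have x1d: "x1 = (LEAST x. x \<in> crit beta lo' hi' \<and> a \<le> x)"
      unfolding x1_def xcrit_def cag crit_carrel_def lo'_def hi'_def by simp
    have wit': "hi' \<in> crit beta lo' hi' \<and> a \<le> hi'" using g unfolding hi'_def by (auto intro: crit.start)
    have x1p: "x1 \<in> crit beta lo' hi' \<and> a \<le> x1" unfolding x1d by (rule LeastI, rule wit')
    have x1min: "\<forall>z. z \<in> crit beta lo' hi' \<and> a \<le> z \<longrightarrow> x1 \<le> z" unfolding x1d by (auto intro: Least_le)
    show False
    proof (cases "a < x1")
      case True
      have "x1 \<le> b" using small[OF conjunct1[OF x1p] conjunct2[OF x1p] x1min True] .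
      then have "beta x1 < beta a" using above[of x1] True a1 b1 by simp
      then show False using ubp unfolding x1_def by simp
    next
      case False
      then have acrit: "a \<in> crit beta lo' hi'" using x1p by (cases "a = x1") auto
      show False
      proof (cases "a < hi'")
        case True
        define x2 where "x2 = (LEAST x. x \<in> crit beta lo' hi' \<and> a < x)"
        have wit2: "hi' \<in> crit beta lo' hi' \<and> a < hi'" using True by (auto intro: crit.start)
        have x2p: "x2 \<in> crit beta lo' hi' \<and> a < x2" unfolding x2_def by (rule LeastI, rule wit2)
        have x2b: "x2 \<le> b"
        proof (cases "g = h")
          case True
          then have "b \<in> crit beta lo' hi'" using bcrit unfolding lo_def hi_def lo'_def hi'_def by simp
          then show ?thesis unfolding x2_def using ab by (intro Least_le) auto
        next
          case False
          then show ?thesis using crit_range[OF conjunct1[OF x2p] lohi'] ghb gh by simp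
        qed
        have cp: "crit_cands beta lo' x2 \<noteq> {} \<and> a \<le> Max (crit_cands beta lo' x2)"
          using crit_pred[OF acrit conjunct1[OF x2p] conjunct2[OF x2p]] .
        define M where "M = Max (crit_cands beta lo' x2)"
        have Mc: "M \<in> crit beta lo' hi'" unfolding M_def using crit.step[OF conjunct1[OF x2p]] cp by simp
        have Mx2: "M < x2" using cands_Max[of beta lo' x2] cands_sub[of beta lo' x2] cp unfolding M_def by auto
        have "M = a"
        proof (rule ccontr)
          assume "M \<noteq> a" then have "a < M" using cp unfolding M_def by simp
          then have "x2 \<le> M" unfolding x2_def using Mc by (intro Least_le) auto
          then show False using Mx2 by simp
        qed
        then have "a \<in> crit_cands beta lo' x2" using cands_Max[of beta lo' x2] cp unfolding M_def by simp
        then have "beta a < beta x2" unfolding crit_cands_def by auto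
        moreover have "beta x2 < beta a" using above[of x2] x2p x2b a1 b1 by simp
        ultimately show False by simp
      next
        case False
        then have ahi: "a = hi'" using g unfolding hi'_def by simp
        have gh2: "g < h" using ahi h ab gh unfolding hi'_def by (cases "g = h") auto
        have gR: "g \<in> {1..num_R n lam}" using gh2 g h by simp
        have ugc: "beta (qq n lam g) \<le> beta (Min (crit_carrel n lam beta (g + 1)))" using UGC gR by auto
        define lo2 where "lo2 = qq n lam g"
        define hi2 where "hi2 = qq n lam (g + 1)"
        have lohi2: "lo2 < hi2" unfolding lo2_def hi2_def using qq_strict[OF n0, of g "g + 1" lam] gh2 h by simp
        have cc2: "crit_carrel n lam beta (g + 1) = crit beta lo2 hi2" unfolding crit_carrel_def lo2_def hi2_def by simp
        define k0 where "k0 = Min (crit beta lo2 hi2)"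
        have fin2: "finite (crit beta lo2 hi2)" using crit_fin[OF lohi2] .
        have ne2: "crit beta lo2 hi2 \<noteq> {}" using crit.start by blast
        have k0c: "k0 \<in> crit beta lo2 hi2" unfolding k0_def using fin2 ne2 by (rule Min_in)
        have k0r: "lo2 < k0 \<and> k0 \<le> hi2" using crit_range[OF k0c lohi2] .
        have k0b: "k0 \<le> b"
        proof (cases "g + 1 = h")
          case True
          then have "h - 1 = g" by simp
          then have "b \<in> crit beta lo2 hi2" using bcrit True unfolding lo_def hi_def lo2_def hi2_def by simp
          then show ?thesis unfolding k0_def by (rule Min_le[OF fin2])
        next
          case False
          then have "qq n lam (g + 1) \<le> qq n lam (h - 1)" using qq_mono[OF n0, of "g + 1" "h - 1" lam] gh2 h by simp
          then show ?thesis using k0r h unfolding hi2_def by simp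
        qed
        have "a < k0" using k0r ahi unfolding lo2_def hi'_def by simp
        then have "beta k0 < beta a" using above[of k0] k0b a1 b1 by simp
        moreover have "beta a \<le> beta k0" using ugc ahi cc2 unfolding k0_def hi'_def by simp
        ultimately show False by simp
      qed
    qed
  qed
qed

end
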